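(* Let $\omega$ be a weight function and let $\mathcal M_\omega=(\mathbf W^{(\lambda)})_{\lambda>0}$, $W^{(\lambda)}_\alpha:=e^{\frac1\lambda\varphi^*_\omega(\lambda|\alpha|)}$. Then $\Lambda_{\{\omega\}}=\Lambda_{\{\mathcal M_\omega\}}$ and $\Lambda_{(\omega)}=\Lambda_{(\mathcal M_\omega)}$, and these equalities are also topological.
   Context: A weight function is a continuous increasing function $\omega:[0,+\infty)\to[0,+\infty)$ such that: ($\alpha$) there is $L\ge1$ with $\omega(2t)\le L(\omega(t)+1)$ for all $t\ge0$; ($\beta$) $\omega(t)=O(t^2)$ as $t\to+\infty$; ($\gamma$) $\log t=o(\omega(t))$ as $t\to+\infty$; ($\delta$) $\varphi_\omega(t):=\omega(e^t)$ is convex on $[0,+\infty)$. For $t\in\mathbb R^d$, $\omega(t):=\omega(|t|)$. Young conjugate: $\varphi_\omega^*(s):=\sup_{t\ge0}\{ts-\varphi_\omega(t)\}$. $\alpha^{1/2}:=(\alpha_1^{1/2},\dots,\alpha_d^{1/2})$. $\Lambda_{\{\omega\}}$ is the set of $\mathbf c=(c_\alpha)\in\mathbb C^{\mathbb N_0^d}$ such that $\sup_\alpha|c_\alpha|e^{\frac1j\omega(\alpha^{1/2}/j)}<\infty$ for some $j\in\mathbb N$ (inductive limit topology); $\Lambda_{(\omega)}$ is the set of $\mathbf c$ with $\sup_\alpha|c_\alpha|e^{j\omega(j\alpha^{1/2})}<\infty$ for all $j\in\mathbb N$ (projective limit topology). For a sequence $\mathbf M=(M_\alpha)$, $\omega_{\mathbf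 M}(t)=\sup_{\alpha\in\mathbb N^d_{0,t}}\log\frac{|t^\alpha|}{M_\alpha}$, where $\mathbb N^d_{0,t}=\{\alpha:\alpha_j=0\text{ whenever }t_j=0\}$, $0^0=1$; $\|\mathbf c\|_{\mathbf M,h}:=\sup_\alpha|c_\alpha|e^{\omega_{\mathbf M}(\alpha^{1/2}/h)}$. $\Lambda_{\{\mathcal M_\omega\}}$ is the set of $\mathbf c$ with $\|\mathbf c\|_{\mathbf W^{(\lambda)},h}<\infty$ for some $\lambda,h>0$ (inductive limit over $j$ of the norms $\|\cdot\|_{\mathbf W^{(j)},j}$); $\Lambda_{(\mathcal M_\omega)}$ the set with this finite for all $\lambda,h>0$ (projective limit of the norms $\|\cdot\|_{\mathbf W^{(1/j)},1/j}$). *)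

theory Defs
  imports "HOL-Analysis.Analysis" "HOL-Library.Landau_Symbols"
begin

definition weight_function :: "(real \<Rightarrow> real) \<Rightarrow> bool" where
  "weight_function \<omega> \<longleftrightarrow>
     continuous_on {0..} \<omega> \<and> mono_on {0..} \<omega> \<and> (\<forall>t\<ge>0. \<omega> t \<ge> 0) \<and>
     (\<exists>L\<ge>1. \<forall>t\<ge>0. \<omega> (2 * t) \<le> L * (\<omega> t + 1)) \<and>
     \<omega> \<in> O[at_top](\<lambda>t. t ^ 2) \<and>
     (\<lambda>t. ln t) \<in> o[at_top](\<omega>) \<and>
     convex_on {0..} (\<lambda>t. \<omega> (exp t))"

definition young_conj :: "(real \<Rightarrow> real) \<Rightarrow> real \<Rightarrow> real" where
  "young_conj \<omega> s = Sup {t * s - \<omega> (exp t) | t. t \<ge> 0}"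

definition vnorm :: "('d::finite \<Rightarrow> real) \<Rightarrow> real" where
  "vnorm t = sqrt (\<Sum>i\<in>UNIV. (t i)\<^sup>2)"

definition mlen :: "('d::finite \<Rightarrow> nat) \<Rightarrow> real" where
  "mlen \<alpha> = (\<Sum>i\<in>UNIV. real (\<alpha> i))"

definition msqrt_div :: "('d::finite \<Rightarrow> nat) \<Rightarrow> real \<Rightarrow> ('d \<Rightarrow> real)" where
  "msqrt_div \<alpha> h = (\<lambda>i. sqrt (real (\<alpha> i)) / h)"

fun eexp :: "ereal \<Rightarrow> ereal" where
  "eexp (ereal x) = ereal (exp x)"
| "eexp PInfty = PInfty"
| "eexp MInfty = 0"

type_synonym 'd mseq = "('d \<Rightarrow> nat) \<Rightarrow> complex"

text \<open>\<open>\<omega>_M(t) = sup_{\<alpha> \<in> N^d_{0,t}} log (|t^\<alpha>| / M_\<alpha>)\<close> (with \<open>0^0 = 1\<close>).\<close>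
definition omegaM :: "(('d::finite \<Rightarrow> nat) \<Rightarrow> real) \<Rightarrow> ('d \<Rightarrow> real) \<Rightarrow> ereal" where
  "omegaM M t = (SUP \<beta>\<in>{\<beta>. \<forall>j. t j = 0 \<longrightarrow> \<beta> j = 0}.
                   ereal (ln ((\<Prod>j\<in>UNIV. \<bar>t j\<bar> ^ \<beta> j) / M \<beta>)))"

definition normM :: "(('d::finite \<Rightarrow> nat) \<Rightarrow> real) \<Rightarrow> real \<Rightarrow> 'd mseq \<Rightarrow> ereal" where
  "normM M h c = (SUP \<alpha>. ereal (cmod (c \<alpha>)) * eexp (omegaM M (msqrt_div \<alpha> h)))"

definition Wseq :: "(real \<Rightarrow> real) \<Rightarrow> real \<Rightarrow> ('d::finite \<Rightarrow> nat) \<Rightarrow> real" where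
  "Wseq \<omega> lam \<alpha> = exp ((1 / lam) * young_conj \<omega> (lam * mlen \<alpha>))"

definition norm_R :: "(real \<Rightarrow> real) \<Rightarrow> nat \<Rightarrow> 'd::finite mseq \<Rightarrow> ereal" where
  "norm_R \<omega> j c = (SUP \<alpha>. ereal (cmod (c \<alpha>) *
        exp ((1 / real j) * \<omega> (vnorm (msqrt_div \<alpha> (real j))))))"

definition norm_B :: "(real \<Rightarrow> real) \<Rightarrow> nat \<Rightarrow> 'd::finite mseq \<Rightarrow> ereal" where
  "norm_B \<omega> j c = (SUP \<alpha>. ereal (cmod (c \<alpha>) *
        exp (real j * \<omega> (vnorm (msqrt_div \<alpha> (1 / real j))))))"

definition Lambda_R :: "(real \<Rightarrow> real) \<Rightarrow> 'd::finite mseq set" where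
  "Lambda_R \<omega> = {c. \<exists>j::nat. j \<ge> 1 \<and> norm_R \<omega> j c < \<infinity>}"

definition Lambda_B :: "(real \<Rightarrow> real) \<Rightarrow> 'd::finite mseq set" where
  "Lambda_B \<omega> = {c. \<forall>j::nat. j \<ge> 1 \<longrightarrow> norm_B \<omega> j c < \<infinity>}"

definition Lambda_MR :: "(real \<Rightarrow> real) \<Rightarrow> 'd::finite mseq set" where
  "Lambda_MR \<omega> = {c. \<exists>lam>0. \<exists>h>0. normM (Wseq \<omega> lam) h c < \<infinity>}"

definition Lambda_MB :: "(real \<Rightarrow> real) \<Rightarrow> 'd::finite mseq set" where
  "Lambda_MB \<omega> = {c. \<forall>lam>0. \<forall>h>0. normM (Wseq \<omega> lam) h c < \<infinity>}"

definition norm_MR :: "(real \<Rightarrow> real) \<Rightarrow> nat \<Rightarrow> 'd::finite mseq \<Rightarrow> ereal" where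
  "norm_MR \<omega> j = normM (Wseq \<omega> (real j)) (real j)"

definition norm_MB :: "(real \<Rightarrow> real) \<Rightarrow> nat \<Rightarrow> 'd::finite mseq \<Rightarrow> ereal" where
  "norm_MB \<omega> j = normM (Wseq \<omega> (1 / real j)) (1 / real j)"

definition abs_convex :: "'d mseq set \<Rightarrow> bool" where
  "abs_convex U \<longleftrightarrow> (\<forall>u\<in>U. \<forall>v\<in>U. \<forall>a b::complex. cmod a + cmod b \<le> 1 \<longrightarrow>
       (\<lambda>\<alpha>. a * u \<alpha> + b * v \<alpha>) \<in> U)"

text \<open>Underlying set of the (LB) inductive limit of the normed spaces
  \<open>{c. N j c < \<infinity>}\<close>, \<open>j \<ge> 1\<close>, and its locally convex inductive limit topology:
  a base of zero neighbourhoods consists of absolutely convex sets absorbing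
  a ball of every step \<open>N j\<close>.\<close>
definition LB_set :: "(nat \<Rightarrow> 'd mseq \<Rightarrow> ereal) \<Rightarrow> 'd mseq set" where
  "LB_set N = {c. \<exists>j\<ge>1. N j c < \<infinity>}"

definition LB_open :: "(nat \<Rightarrow> 'd mseq \<Rightarrow> ereal) \<Rightarrow> 'd mseq set \<Rightarrow> bool" where
  "LB_open N A \<longleftrightarrow> A \<subseteq> LB_set N \<and>
     (\<forall>x\<in>A. \<exists>U. abs_convex U \<and> U \<subseteq> LB_set N \<and>
        (\<forall>j\<ge>1. \<exists>\<epsilon>>0. {c. N j c < ereal \<epsilon>} \<subseteq> U) \<and>
        (\<lambda>u. (\<lambda>\<alpha>. x \<alpha> + u \<alpha>)) ` U \<subseteq> A)"

text \<open>Projective limit: topology generated by the seminorms \<open>N j\<close>, \<open>j \<ge> 1\<close>.\<close>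
definition PL_set :: "(nat \<Rightarrow> 'd mseq \<Rightarrow> ereal) \<Rightarrow> 'd mseq set" where
  "PL_set N = {c. \<forall>j\<ge>1. N j c < \<infinity>}"

definition PL_open :: "(nat \<Rightarrow> 'd mseq \<Rightarrow> ereal) \<Rightarrow> 'd mseq set \<Rightarrow> bool" where
  "PL_open N A \<longleftrightarrow> A \<subseteq> PL_set N \<and>
     (\<forall>x\<in>A. \<exists>n\<ge>1. \<exists>\<epsilon>>0.
        {y\<in>PL_set N. \<forall>j\<in>{1..n}. N j (\<lambda>\<alpha>. y \<alpha> - x \<alpha>) < ereal \<epsilon>} \<subseteq> A)"

end

theory Submission
  imports Defs
begin


lemma wf_facts:
  assumes "weight_function \<omega>"
  shows "\<And>t. t \<ge> 0 \<Longrightarrow> \<omega> t \<ge> 0"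
    and "\<And>x y. 0 \<le> x \<Longrightarrow> x \<le> y \<Longrightarrow> \<omega> x \<le> \<omega> y"
    and "convex_on {0..} (\<lambda>t. \<omega> (exp t))"
    and "\<And>e. e > 0 \<Longrightarrow> \<exists>T\<ge>1. \<forall>t\<ge>T. ln t \<le> e * \<omega> t"
proof -
  show "\<And>t. t \<ge> 0 \<Longrightarrow> \<omega> t \<ge> 0" using assms unfolding weight_function_def by auto
  show "\<And>x y. 0 \<le> x \<Longrightarrow> x \<le> y \<Longrightarrow> \<omega> x \<le> \<omega> y" using assms unfolding weight_function_def
    by (meson atLeast_iff mono_onD order_trans)
  show "convex_on {0..} (\<lambda>t. \<omega> (exp t))" using assms unfolding weight_function_def by auto
  fix e :: real assume e: "e > 0"
  have "(\<lambda>t. ln t) \<in> o[at_top](\<omega>)" using assms unfolding weight_function_def by auto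
  from landau_o.smallD[OF this e] obtain T where T: "\<And>t. t \<ge> T \<Longrightarrow> norm (ln t) \<le> e * norm (\<omega> t)"
    by (auto simp: eventually_at_top_linorder)
  have nn: "\<And>t. t \<ge> 0 \<Longrightarrow> \<omega> t \<ge> 0" using assms unfolding weight_function_def by auto
  show "\<exists>T\<ge>1. \<forall>t\<ge>T. ln t \<le> e * \<omega> t"
  proof (intro exI[of _ "max T 1"] conjI allI impI)
    fix t assume "max T 1 \<le> t"
    then have "t \<ge> T" "t \<ge> 0" by auto
    from T[OF this(1)] nn[OF this(2)] show "ln t \<le> e * \<omega> t" by auto
  qed auto
qed



context fixes \<omega> :: "real \<Rightarrow> real" assumes wf: "weight_function \<omega>" begin

lemma om_nn: "t \<ge> 0 \<Longrightarrow> \<omega> t \<ge> 0" using wf_facts[OF wf] by auto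
lemma om_mono: "0 \<le> x \<Longrightarrow> x \<le> y \<Longrightarrow> \<omega> x \<le> \<omega> y" using wf_facts[OF wf] by auto
lemma om_conv: "convex_on {0..} (\<lambda>t. \<omega> (exp t))" using wf_facts[OF wf] by auto
lemma om_o: "e > 0 \<Longrightarrow> \<exists>T\<ge>1. \<forall>t\<ge>T. ln t \<le> e * \<omega> t" using wf_facts[OF wf] by auto

lemma YC_bdd: assumes s: "s \<ge> 0" shows "bdd_above {t * s - \<omega> (exp t) | t. t \<ge> 0}"
proof -
  obtain T where T: "T \<ge> 1" "\<And>t. t \<ge> T \<Longrightarrow> ln t \<le> (1 / (s + 1)) * \<omega> t"
    using om_o[of "1/(s+1)"] s by auto
  show ?thesis unfolding bdd_above_def
  proof (intro exI[of _ "s * ln T"] allI impI, safe)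
    fix t :: real assume t: "t \<ge> 0"
    show "t * s - \<omega> (exp t) \<le> s * ln T"
    proof (cases "exp t \<ge> T")
      case True
      have "ln (exp t) \<le> (1 / (s + 1)) * \<omega> (exp t)" by (rule T(2)[OF True])
      then have "t \<le> \<omega> (exp t) / (s + 1)" by simp
      moreover have sp: "s + 1 > 0" using s by simp
      ultimately have "t * (s + 1) \<le> \<omega> (exp t)" by (simp add: pos_le_divide_eq)
      moreover have "s * ln T \<ge> 0" using s T by simp
      ultimately show ?thesis using t by (simp add: algebra_simps)
    next
      case False
      then have "t \<le> ln T" using T(1) by (subst ln_ge_iff) auto
      then have "t * s \<le> s * ln T" using s by (simp add: mult_left_mono mult.commute)
      moreover have "\<omega> (exp t) \<ge> 0" by (rule om_nn) simp
      ultimately show ?thesis by linarith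
    qed
  qed
qed

lemma YC_ge: assumes "s \<ge> 0" "x \<ge> 0" shows "x * s - \<omega> (exp x) \<le> young_conj \<omega> s"
  unfolding young_conj_def by (rule cSup_upper) (use assms YC_bdd in auto)

lemma YC_le: assumes "\<And>x. x \<ge> 0 \<Longrightarrow> x * s - \<omega> (exp x) \<le> B" shows "young_conj \<omega> s \<le> B"
  unfolding young_conj_def by (rule cSup_least) (use assms in auto)

end


lemma convex_subgrad:
  fixes f :: "real \<Rightarrow> real"
  assumes cv: "convex_on {0..} f" and mo: "\<And>x y. 0 \<le> x \<Longrightarrow> x \<le> y \<Longrightarrow> f x \<le> f y"
    and x0: "x0 > 0"
  shows "\<exists>s0\<ge>0. \<forall>x\<ge>0. f x \<ge> f x0 + s0 * (x - x0)"
proof -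
  define S where "S = {(f y - f x0) / (y - x0) | y. y > x0}"
  have ne: "S \<noteq> {}" unfolding S_def by (auto intro: exI[of _ "x0+1"])
  have pos: "\<And>z. z \<in> S \<Longrightarrow> z \<ge> 0" unfolding S_def using mo x0
    by (auto intro!: divide_nonneg_pos)
  have bdd: "bdd_below S" using pos by (auto simp: bdd_below_def)
  define s0 where "s0 = Inf S"
  have s0: "s0 \<ge> 0" unfolding s0_def by (rule cInf_greatest[OF ne pos])
  have low: "\<And>y. y > x0 \<Longrightarrow> s0 \<le> (f y - f x0) / (y - x0)"
    unfolding s0_def by (rule cInf_lower[OF _ bdd]) (auto simp: S_def)
  have upp: "\<And>x. 0 \<le> x \<Longrightarrow> x < x0 \<Longrightarrow> (f x - f x0) / (x - x0) \<le> s0"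
  proof -
    fix x assume x: "0 \<le> x" "x < x0"
    show "(f x - f x0) / (x - x0) \<le> s0" unfolding s0_def
    proof (rule cInf_greatest[OF ne])
      fix z assume "z \<in> S"
      then obtain y where y: "y > x0" "z = (f y - f x0) / (y - x0)" unfolding S_def by auto
      have "(f x - f x0) / (x - x0) \<le> (f x - f y) / (x - y)"
        using convex_on_slope_le(1)[OF cv, of x y x0] x y x0 by auto
      also have "\<dots> \<le> (f x0 - f y) / (x0 - y)"
        using convex_on_slope_le(2)[OF cv, of x y x0] x y x0 by auto
      also have "\<dots> = z" using y by (simp add: field_simps)
      finally show "(f x - f x0) / (x - x0) \<le> z" .
    qed
  qed
  show ?thesis
  proof (intro exI[of _ s0] conjI allI impI s0)
    fix x :: real assume x: "x \<ge> 0"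
    consider "x > x0" | "x = x0" | "x < x0" by linarith
    then show "f x \<ge> f x0 + s0 * (x - x0)"
    proof cases
      case 1
      with low[OF 1] show ?thesis by (simp add: field_simps)
    next
      case 3
      with upp[OF x 3] show ?thesis by (simp add: field_simps)
    qed simp
  qed
qed



lemma comp_le_vnorm: "\<bar>t j\<bar> \<le> vnorm t"
proof -
  have "(t j)\<^sup>2 \<le> (\<Sum>i\<in>UNIV. (t i)\<^sup>2)"
    by (rule member_le_sum) auto
  then have "sqrt ((t j)\<^sup>2) \<le> vnorm t" unfolding vnorm_def by (rule real_sqrt_le_mono)
  then show ?thesis by simp
qed

lemma mlen_eq: "mlen \<beta> = real (\<Sum>i\<in>UNIV. \<beta> i)" unfolding mlen_def by simp

context fixes \<omega> :: "real \<Rightarrow> real" assumes wf: "weight_function \<omega>" begin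

lemma omegaM_upper:
  fixes t :: "'d::finite \<Rightarrow> real"
  assumes lam: "lam > 0"
  shows "omegaM (Wseq \<omega> lam) t \<le> ereal (\<omega> (max (vnorm t) 1) / lam)"
  unfolding omegaM_def
proof (rule SUP_least)
  fix \<beta> :: "'d \<Rightarrow> nat" assume "\<beta> \<in> {\<beta>. \<forall>j. t j = 0 \<longrightarrow> \<beta> j = 0}"
  then have adm: "\<And>j. t j = 0 \<Longrightarrow> \<beta> j = 0" by auto
  define P where "P = (\<Prod>j\<in>UNIV. \<bar>t j\<bar> ^ \<beta> j)"
  define n where "n = (\<Sum>i\<in>UNIV. \<beta> i)"
  define R where "R = max (vnorm t) 1"
  define x where "x = ln R"
  have R1: "R \<ge> 1" unfolding R_def by simp
  have x0: "x \<ge> 0" unfolding x_def using R1 by simp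
  have Ppos: "P > 0" unfolding P_def
    by (rule prod_pos) (metis adm zero_less_abs_iff power_0 zero_less_one zero_less_power)
  have "P \<le> (\<Prod>j\<in>UNIV. R ^ \<beta> j)" unfolding P_def
    by (rule prod_mono) (use comp_le_vnorm[of t] in \<open>auto simp: R_def intro!: power_mono max.coboundedI1\<close>)
  also have "\<dots> = R ^ n" unfolding n_def by (simp add: power_sum)
  finally have PR: "P \<le> R ^ n" .
  have lnP: "ln P \<le> real n * x"
  proof -
    have "ln P \<le> ln (R ^ n)" using PR Ppos by simp
    also have "\<dots> = real n * x" unfolding x_def using R1 by (simp add: ln_realpow)
    finally show ?thesis .
  qed
  have yc: "x * (lam * real n) - \<omega> (exp x) \<le> young_conj \<omega> (lam * real n)"
    by (rule YC_ge[OF wf]) (use lam x0 in auto)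
  have ex: "exp x = R" unfolding x_def using R1 by simp
  have "ln (P / Wseq \<omega> lam \<beta>) = ln P - (1/lam) * young_conj \<omega> (lam * real n)"
    using Ppos by (simp add: ln_div Wseq_def mlen_eq n_def)
  also have "\<dots> \<le> real n * x - (1/lam) * (x * (lam * real n) - \<omega> R)"
    using lnP yc ex lam by (smt (verit, best) divide_pos_pos mult_left_mono)
  also have "\<dots> = \<omega> R / lam" using lam by (simp add: field_simps)
  finally show "ereal (ln ((\<Prod>j\<in>UNIV. \<bar>t j\<bar> ^ \<beta> j) / Wseq \<omega> lam \<beta>)) \<le> ereal (\<omega> R / lam)"
    unfolding P_def by simp
qed

end


context fixes \<omega> :: "real \<Rightarrow> real" assumes wf: "weight_function \<omega>" begin

lemma omegaM_lower:
  fixes t :: "'d::finite \<Rightarrow> real"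
  assumes lam: "lam > 0"
  shows "omegaM (Wseq \<omega> lam) t \<ge> ereal (\<omega> \<bar>t i0\<bar> / lam - ln (1 + \<bar>t i0\<bar>))"
proof -
  define m where "m = \<bar>t i0\<bar>"
  have m0: "m \<ge> 0" unfolding m_def by simp
  have ln0: "ln (1 + m) \<ge> 0" using m0 by simp
  define A where "A = {\<beta>::'d \<Rightarrow> nat. \<forall>j. t j = 0 \<longrightarrow> \<beta> j = 0}"
  have key: "\<exists>\<beta>\<in>A. \<omega> m / lam - ln (1 + m) \<le> ln ((\<Prod>j\<in>UNIV. \<bar>t j\<bar> ^ \<beta> j) / Wseq \<omega> lam \<beta>)"
  proof (cases "m > 1")
    case True
    define x0 where "x0 = ln m"
    have x0: "x0 > 0" unfolding x0_def using True by simp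
    have emx: "exp x0 = m" unfolding x0_def using True by simp
    have mo: "\<And>x y. 0 \<le> x \<Longrightarrow> x \<le> y \<Longrightarrow> \<omega> (exp x) \<le> \<omega> (exp y)"
      by (rule om_mono[OF wf]) auto
    obtain s0 where s0: "s0 \<ge> 0" "\<And>x. x \<ge> 0 \<Longrightarrow> \<omega> (exp x) \<ge> \<omega> (exp x0) + s0 * (x - x0)"
      using convex_subgrad[OF om_conv[OF wf] mo x0] by blast
    define k where "k = nat \<lfloor>s0 / lam\<rfloor>"
    have fl: "real k = of_int \<lfloor>s0 / lam\<rfloor>" unfolding k_def using s0 lam by simp
    have k0: "real k \<le> s0 / lam" using fl by linarith
    have k1: "lam * real k \<le> s0" using k0 lam by (simp add: pos_le_divide_eq mult.commute)
    have k2: "real k \<ge> s0 / lam - 1" using fl by linarith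
    define \<beta> where "\<beta> = (\<lambda>j. if j = i0 then k else 0)"
    have tne: "t i0 \<noteq> 0" using True m_def by auto
    have bA: "\<beta> \<in> A" unfolding A_def \<beta>_def using tne by auto
    have "(\<lambda>j. \<bar>t j\<bar> ^ \<beta> j) = (\<lambda>j. if j = i0 then m ^ k else 1)"
      by (auto simp: \<beta>_def m_def)
    then have P: "(\<Prod>j\<in>UNIV. \<bar>t j\<bar> ^ \<beta> j) = m ^ k" by (simp only:) simp
    have ml: "mlen \<beta> = real k" unfolding mlen_eq \<beta>_def by simp
    have yc: "young_conj \<omega> (lam * real k) \<le> x0 * s0 - \<omega> (exp x0)"
    proof (rule YC_le[OF wf])
      fix x :: real assume x: "x \<ge> 0"
      have "x * (lam * real k) \<le> x * s0" using k1 x by (simp add: mult_left_mono)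
      then show "x * (lam * real k) - \<omega> (exp x) \<le> x0 * s0 - \<omega> (exp x0)"
        using s0(2)[OF x] by (simp add: algebra_simps)
    qed
    have mk: "m ^ k > 0" using True by simp
    have W: "Wseq \<omega> lam \<beta> = exp ((1/lam) * young_conj \<omega> (lam * real k))"
      unfolding Wseq_def ml ..
    have e1: "ln ((\<Prod>j\<in>UNIV. \<bar>t j\<bar> ^ \<beta> j) / Wseq \<omega> lam \<beta>)
        = real k * x0 - (1/lam) * young_conj \<omega> (lam * real k)"
      unfolding P W using mk True
      by (simp add: ln_div ln_realpow x0_def)
    have e2: "real k * x0 \<ge> (s0/lam - 1) * x0" using k2 x0 by (simp add: mult_right_mono)
    have e3: "(1/lam) * young_conj \<omega> (lam * real k) \<le> (1/lam) * (x0 * s0 - \<omega> (exp x0))"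
        using yc lam by (simp add: divide_right_mono)
    have e4: "(s0/lam - 1) * x0 - (1/lam) * (x0 * s0 - \<omega> (exp x0)) = \<omega> m / lam - x0"
      using lam emx by (simp add: field_simps)
    have "ln ((\<Prod>j\<in>UNIV. \<bar>t j\<bar> ^ \<beta> j) / Wseq \<omega> lam \<beta>) \<ge> \<omega> m / lam - x0"
      unfolding e1 e4[symmetric] using e2 e3 by (rule diff_mono)
    moreover have "x0 \<le> ln (1 + m)" unfolding x0_def using True by simp
    ultimately have "\<omega> m / lam - ln (1 + m) \<le> ln ((\<Prod>j\<in>UNIV. \<bar>t j\<bar> ^ \<beta> j) / Wseq \<omega> lam \<beta>)"
      by linarith
    then show ?thesis using bA by blast
  next
    case False
    define \<beta> where "\<beta> = (\<lambda>j::'d. 0::nat)"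
    have bA: "\<beta> \<in> A" unfolding A_def \<beta>_def by auto
    have ml: "mlen \<beta> = 0" unfolding mlen_eq \<beta>_def by simp
    have yc: "young_conj \<omega> 0 \<le> - \<omega> 1"
    proof (rule YC_le[OF wf])
      fix x :: real assume x: "x \<ge> 0"
      have "\<omega> 1 \<le> \<omega> (exp x)" by (rule om_mono[OF wf]) (use x in auto)
      then show "x * 0 - \<omega> (exp x) \<le> - \<omega> 1" by simp
    qed
    have P1: "(\<Prod>j\<in>UNIV. \<bar>t j\<bar> ^ \<beta> j) = 1" by (simp add: \<beta>_def)
    have W: "Wseq \<omega> lam \<beta> = exp ((1/lam) * young_conj \<omega> 0)"
      unfolding Wseq_def ml by simp
    have f1: "ln ((\<Prod>j\<in>UNIV. \<bar>t j\<bar> ^ \<beta> j) / Wseq \<omega> lam \<beta>) = - (1/lam) * young_conj \<omega> 0"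
      unfolding P1 W by (simp add: ln_div)
    have f2: "- (1/lam) * young_conj \<omega> 0 \<ge> \<omega> 1 / lam" using yc lam by (simp add: field_simps)
    have "\<omega> m \<le> \<omega> 1" using om_mono[OF wf m0, of 1] False by simp
    then have f3: "\<omega> m / lam \<le> \<omega> 1 / lam" using lam by (simp add: divide_right_mono)
    have "ln ((\<Prod>j\<in>UNIV. \<bar>t j\<bar> ^ \<beta> j) / Wseq \<omega> lam \<beta>) \<ge> \<omega> m / lam"
      unfolding f1 using f2 f3 by linarith
    then have "\<omega> m / lam - ln (1 + m) \<le> ln ((\<Prod>j\<in>UNIV. \<bar>t j\<bar> ^ \<beta> j) / Wseq \<omega> lam \<beta>)"
      using ln0 by linarith
    then show ?thesis using bA by blast
  qed
  then obtain \<beta> where b: "\<beta> \<in> A" "\<omega> m / lam - ln (1 + m) \<le> ln ((\<Prod>j\<in>UNIV. \<bar>t j\<bar> ^ \<beta> j) / Wseq \<omega> lam \<beta>)"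
    by blast
  have "ereal (\<omega> m / lam - ln (1 + m)) \<le> ereal (ln ((\<Prod>j\<in>UNIV. \<bar>t j\<bar> ^ \<beta> j) / Wseq \<omega> lam \<beta>))"
    using b(2) by (simp only: ereal_less_eq)
  also have "\<dots> \<le> omegaM (Wseq \<omega> lam) t" unfolding omegaM_def
    by (rule SUP_upper) (use b(1) in \<open>unfold A_def\<close>)
  finally show ?thesis unfolding m_def .
qed

end


lemma vnorm_msqrt: "h > 0 \<Longrightarrow> vnorm (msqrt_div \<alpha> h) = sqrt (mlen \<alpha>) / h"
proof -
  assume h: "h > 0"
  have "(\<Sum>i\<in>UNIV. (msqrt_div \<alpha> h i)\<^sup>2) = (\<Sum>i\<in>UNIV. real (\<alpha> i)) / h\<^sup>2"
    unfolding msqrt_div_def by (simp add: power_divide sum_divide_distrib)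
  then show ?thesis unfolding vnorm_def mlen_def using h by (simp add: real_sqrt_divide)
qed

lemma exists_max_idx: "\<exists>i0. \<forall>i. (\<alpha>::'d::finite \<Rightarrow> nat) i \<le> \<alpha> i0"
proof -
  have "Max (range \<alpha>) \<in> range \<alpha>" by (rule Max_in) auto
  then obtain i0 where "\<alpha> i0 = Max (range \<alpha>)" by (metis imageE)
  moreover have "\<forall>i. \<alpha> i \<le> Max (range \<alpha>)" by simp
  ultimately show ?thesis by metis
qed

lemma mlen_le_max:
  fixes \<alpha> :: "'d::finite \<Rightarrow> nat"
  assumes "\<forall>i. \<alpha> i \<le> \<alpha> i0"
  shows "sqrt (mlen \<alpha>) \<le> real CARD('d) * sqrt (real (\<alpha> i0))"
proof -
  define D where "D = real CARD('d)"
  have D1: "D \<ge> 1" unfolding D_def by simp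
  have "mlen \<alpha> \<le> (\<Sum>i\<in>(UNIV::'d set). real (\<alpha> i0))" unfolding mlen_def
    by (intro sum_mono) (use assms in auto)
  also have "\<dots> = D * real (\<alpha> i0)" unfolding D_def by simp
  finally have "sqrt (mlen \<alpha>) \<le> sqrt D * sqrt (real (\<alpha> i0))" by (simp add: real_sqrt_mult[symmetric])
  also have "\<dots> \<le> D * sqrt (real (\<alpha> i0))"
  proof (rule mult_right_mono)
    have "D \<le> D * D" using D1 by (simp add: mult_le_cancel_left1)
    then have "sqrt D \<le> sqrt (D * D)" by (rule real_sqrt_le_mono)
    also have "\<dots> = D" using D1 by (simp add: real_sqrt_abs2)
    finally show "sqrt D \<le> D" .
  qed simp
  finally show ?thesis unfolding D_def .
qed

lemma eexp_inf[simp]: "eexp \<infinity> = \<infinity>" "eexp (-\<infinity>) = 0"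
  using eexp.simps(2,3) by simp_all

lemma eexp_ge: "ereal r \<le> x \<Longrightarrow> ereal (exp r) \<le> eexp x"
  by (cases x) auto

lemma eexp_le: "x \<le> ereal r \<Longrightarrow> eexp x \<le> ereal (exp r)"
  by (cases x) auto

lemma eexp_nonneg: "eexp x \<ge> 0"
  by (cases x) auto

lemma sup_dom:
  fixes f g :: "'a \<Rightarrow> ereal"
  assumes "\<And>a. f a \<le> ereal K * g a" "K \<ge> 0"
  shows "(SUP a. f a) \<le> ereal K * (SUP a. g a)"
proof (rule SUP_least)
  fix a
  have "g a \<le> (SUP a. g a)" by (rule SUP_upper) simp
  then have "ereal K * g a \<le> ereal K * (SUP a. g a)"
    by (rule ereal_mult_left_mono) (use assms in simp)
  then show "f a \<le> ereal K * (SUP a. g a)" using assms(1)[of a] by (rule order_trans[rotated])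
qed

definition normG :: "(real \<Rightarrow> real) \<Rightarrow> real \<Rightarrow> real \<Rightarrow> 'd::finite mseq \<Rightarrow> ereal" where
  "normG \<omega> a b c = (SUP \<alpha>. ereal (cmod (c \<alpha>) * exp (a * \<omega> (b * sqrt (mlen \<alpha>)))))"

lemma norm_R_G: "j \<ge> 1 \<Longrightarrow> norm_R \<omega> j c = normG \<omega> (1 / real j) (1 / real j) c"
  unfolding norm_R_def normG_def by (simp add: vnorm_msqrt)

lemma norm_B_G: "j \<ge> 1 \<Longrightarrow> norm_B \<omega> j c = normG \<omega> (real j) (real j) c"
  unfolding norm_B_def normG_def by (simp add: vnorm_msqrt mult.commute)

context fixes \<omega> :: "real \<Rightarrow> real" assumes wf: "weight_function \<omega>" begin

lemma ln_bound: "e > 0 \<Longrightarrow> \<exists>C. \<forall>m\<ge>0. ln (1 + m) \<le> e * \<omega> m + C"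
proof -
  assume e: "e > 0"
  obtain T where T: "T \<ge> 1" "\<And>t. t \<ge> T \<Longrightarrow> ln t \<le> e * \<omega> t" using om_o[OF wf e] by auto
  show ?thesis
  proof (intro exI[of _ "T + 1"] allI impI)
    fix m :: real assume m: "m \<ge> 0"
    have eo: "e * \<omega> m \<ge> 0" using e om_nn[OF wf m] by simp
    show "ln (1 + m) \<le> e * \<omega> m + (T + 1)"
    proof (cases "m \<ge> T")
      case True
      have "ln (1 + m) \<le> ln (2 * m)" using True T by simp
      also have "\<dots> = ln 2 + ln m" using True T by (simp add: ln_mult)
      also have "\<dots> \<le> 1 + e * \<omega> m" using T(2)[OF True] ln_2_less_1 by linarith
      finally show ?thesis using T by linarith
    next
      case False
      have "ln (1 + m) \<le> ln (1 + T)" using False m by simp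
      also have "\<dots> \<le> T" by (rule ln_add_one_self_le_self) (use T in simp)
      finally show ?thesis using eo by linarith
    qed
  qed
qed

lemma weight_up:
  fixes \<alpha> :: "'d::finite \<Rightarrow> nat"
  assumes lam: "lam > 0" and h: "h > 0" and a: "a \<ge> 1 / lam" and b: "b \<ge> 1 / h"
  shows "eexp (omegaM (Wseq \<omega> lam) (msqrt_div \<alpha> h))
         \<le> ereal (exp (\<omega> 1 / lam) * exp (a * \<omega> (b * sqrt (mlen \<alpha>))))"
proof -
  define s where "s = sqrt (mlen \<alpha>)"
  have s0: "s \<ge> 0" unfolding s_def mlen_def by (simp add: sum_nonneg)
  have "1 / h > 0" using h by simp
  then have b0: "b > 0" using b by linarith
  have up1: "omegaM (Wseq \<omega> lam) (msqrt_div \<alpha> h) \<le> ereal (\<omega> (max (s / h) 1) / lam)"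
    using omegaM_upper[OF wf lam, of "msqrt_div \<alpha> h"] unfolding vnorm_msqrt[OF h, of \<alpha>] s_def .
  have up2: "\<omega> (max (s / h) 1) / lam \<le> \<omega> 1 / lam + a * \<omega> (b * s)"
  proof -
    have "s / h = (1 / h) * s" by simp
    also have "\<dots> \<le> b * s" using b s0 by (rule mult_right_mono)
    finally have sh: "s / h \<le> b * s" .
    have w1: "\<omega> (max (s / h) 1) \<le> \<omega> 1 + \<omega> (b * s)"
    proof (cases "s / h \<le> 1")
      case True then show ?thesis using om_nn[OF wf, of "b * s"] b0 s0 by simp
    next
      case False
      then have "\<omega> (max (s / h) 1) = \<omega> (s / h)" by simp
      also have "\<dots> \<le> \<omega> (b * s)" by (rule om_mono[OF wf]) (use sh s0 h in auto)
      finally show ?thesis using om_nn[OF wf, of 1] by simp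
    qed
    have bs0: "\<omega> (b * s) \<ge> 0" by (rule om_nn[OF wf]) (use b0 s0 in simp)
    have "\<omega> (b * s) / lam \<le> a * \<omega> (b * s)"
      using mult_right_mono[OF a bs0] by simp
    moreover have "\<omega> (max (s / h) 1) / lam \<le> (\<omega> 1 + \<omega> (b * s)) / lam"
      using w1 lam by (simp add: divide_right_mono)
    ultimately show ?thesis by (simp add: add_divide_distrib)
  qed
  have "omegaM (Wseq \<omega> lam) (msqrt_div \<alpha> h) \<le> ereal (\<omega> 1 / lam + a * \<omega> (b * s))"
    using up1 up2 by (meson ereal_less_eq(3) order_trans)
  then show ?thesis unfolding s_def by (simp add: eexp_le exp_add[symmetric])
qed

lemma weight_low:
  fixes lam h :: real
  assumes lam: "lam > 0" and h: "h > 0"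
  shows "\<exists>K>0. \<forall>a b. 0 < a \<longrightarrow> a \<le> 1 / (2 * lam) \<longrightarrow> 0 < b \<longrightarrow> b \<le> 1 / (real CARD('d) * h) \<longrightarrow>
     (\<forall>\<alpha>::'d::finite \<Rightarrow> nat. ereal (exp (a * \<omega> (b * sqrt (mlen \<alpha>))))
         \<le> ereal K * eexp (omegaM (Wseq \<omega> lam) (msqrt_div \<alpha> h)))"
proof -
  obtain C where C: "\<And>m. m \<ge> 0 \<Longrightarrow> ln (1 + m) \<le> (1 / (2 * lam)) * \<omega> m + C"
    using ln_bound[of "1 / (2 * lam)"] lam by auto
  show ?thesis
  proof (intro exI[of _ "exp C"] conjI allI impI)
    fix a b :: real and \<alpha> :: "'d \<Rightarrow> nat"
    assume a: "0 < a" "a \<le> 1 / (2 * lam)" and b: "0 < b" "b \<le> 1 / (real CARD('d) * h)"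
    obtain i0 where i0: "\<forall>i. \<alpha> i \<le> \<alpha> i0" using exists_max_idx by blast
    define D where "D = real CARD('d)"
    have D1: "D \<ge> 1" unfolding D_def by simp
    define m where "m = sqrt (real (\<alpha> i0)) / h"
    have m0: "m \<ge> 0" unfolding m_def using h by simp
    have tm: "\<bar>msqrt_div \<alpha> h i0\<bar> = m" unfolding m_def msqrt_div_def using h by simp
    define s where "s = sqrt (mlen \<alpha>)"
    have s0: "s \<ge> 0" unfolding s_def mlen_def by (simp add: sum_nonneg)
    have sD: "s \<le> D * sqrt (real (\<alpha> i0))" unfolding s_def D_def by (rule mlen_le_max[OF i0])
    have bs: "b * s \<le> m"
    proof -
      have "b * s \<le> (1 / (D * h)) * s" by (rule mult_right_mono) (use b s0 in \<open>simp_all add: D_def\<close>)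
      also have "\<dots> = s / (D * h)" by simp
      also have "\<dots> \<le> D * sqrt (real (\<alpha> i0)) / (D * h)" by (rule divide_right_mono) (use sD D1 h in simp_all)
      also have "\<dots> = m" unfolding m_def using D1 by simp
      finally show ?thesis .
    qed
    have wbs: "\<omega> (b * s) \<le> \<omega> m" by (rule om_mono[OF wf]) (use b s0 bs in auto)
    have wbs0: "\<omega> (b * s) \<ge> 0" by (rule om_nn[OF wf]) (use b s0 in auto)
    have aw: "a * \<omega> (b * s) \<le> (1 / (2 * lam)) * \<omega> m"
      using mult_mono[OF a(2) wbs] a wbs0 lam by simp
    have low: "ereal (\<omega> m / lam - ln (1 + m)) \<le> omegaM (Wseq \<omega> lam) (msqrt_div \<alpha> h)"
      using omegaM_lower[OF wf lam, of "msqrt_div \<alpha> h" i0] tm by simp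
    have "a * \<omega> (b * s) - C \<le> \<omega> m / lam - ln (1 + m)"
      using C[OF m0] aw lam by (simp add: field_simps)
    then have "ereal (a * \<omega> (b * s) - C) \<le> omegaM (Wseq \<omega> lam) (msqrt_div \<alpha> h)"
      using low by (meson ereal_less_eq(3) order_trans)
    then have "ereal (exp (a * \<omega> (b * s) - C)) \<le> eexp (omegaM (Wseq \<omega> lam) (msqrt_div \<alpha> h))"
      by (rule eexp_ge)
    then have "ereal (exp C) * ereal (exp (a * \<omega> (b * s) - C)) \<le> ereal (exp C) * eexp (omegaM (Wseq \<omega> lam) (msqrt_div \<alpha> h))"
      by (rule ereal_mult_left_mono) simp
    moreover have "ereal (exp C) * ereal (exp (a * \<omega> (b * s) - C)) = ereal (exp (a * \<omega> (b * s)))"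
      by (simp add: exp_diff)
    ultimately show "ereal (exp (a * \<omega> (b * sqrt (mlen \<alpha>)))) \<le> ereal (exp C) * eexp (omegaM (Wseq \<omega> lam) (msqrt_div \<alpha> h))"
      unfolding s_def by simp
  qed simp
qed

end


context fixes \<omega> :: "real \<Rightarrow> real" assumes wf: "weight_function \<omega>" begin

lemma normM_le_G:
  assumes lam: "lam > 0" and h: "h > 0" and a: "a \<ge> 1 / lam" and b: "b \<ge> 1 / h"
  shows "normM (Wseq \<omega> lam) h (c :: 'd::finite mseq) \<le> ereal (exp (\<omega> 1 / lam)) * normG \<omega> a b c"
  unfolding normM_def normG_def
proof (rule sup_dom)
  fix \<alpha> :: "'d \<Rightarrow> nat"
  have "ereal (cmod (c \<alpha>)) * eexp (omegaM (Wseq \<omega> lam) (msqrt_div \<alpha> h))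
      \<le> ereal (cmod (c \<alpha>)) * ereal (exp (\<omega> 1 / lam) * exp (a * \<omega> (b * sqrt (mlen \<alpha>))))"
    by (rule ereal_mult_left_mono[OF weight_up[OF wf lam h a b]]) simp
  also have "\<dots> = ereal (exp (\<omega> 1 / lam)) * ereal (cmod (c \<alpha>) * exp (a * \<omega> (b * sqrt (mlen \<alpha>))))"
    by simp
  finally show "ereal (cmod (c \<alpha>)) * eexp (omegaM (Wseq \<omega> lam) (msqrt_div \<alpha> h))
      \<le> ereal (exp (\<omega> 1 / lam)) * ereal (cmod (c \<alpha>) * exp (a * \<omega> (b * sqrt (mlen \<alpha>))))" .
qed simp

lemma G_le_normM:
  assumes lam: "lam > 0" and h: "h > 0"
  shows "\<exists>K>0. \<forall>a b. 0 < a \<longrightarrow> a \<le> 1 / (2 * lam) \<longrightarrow> 0 < b \<longrightarrow> b \<le> 1 / (real CARD('d) * h) \<longrightarrow>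
     (\<forall>c :: 'd::finite mseq. normG \<omega> a b c \<le> ereal K * normM (Wseq \<omega> lam) h c)"
proof -
  obtain K where K: "K > 0" "\<And>a b. 0 < a \<Longrightarrow> a \<le> 1 / (2 * lam) \<Longrightarrow> 0 < b \<Longrightarrow> b \<le> 1 / (real CARD('d) * h) \<Longrightarrow>
     (\<forall>\<alpha>::'d \<Rightarrow> nat. ereal (exp (a * \<omega> (b * sqrt (mlen \<alpha>))))
         \<le> ereal K * eexp (omegaM (Wseq \<omega> lam) (msqrt_div \<alpha> h)))"
    using weight_low[OF wf lam h] by blast
  show ?thesis
  proof (intro exI[of _ K] conjI allI impI)
    fix a b :: real and c :: "'d mseq"
    assume ab: "0 < a" "a \<le> 1 / (2 * lam)" "0 < b" "b \<le> 1 / (real CARD('d) * h)"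
    show "normG \<omega> a b c \<le> ereal K * normM (Wseq \<omega> lam) h c"
      unfolding normM_def normG_def
    proof (rule sup_dom)
      fix \<alpha> :: "'d \<Rightarrow> nat"
      have "ereal (cmod (c \<alpha>) * exp (a * \<omega> (b * sqrt (mlen \<alpha>))))
          = ereal (cmod (c \<alpha>)) * ereal (exp (a * \<omega> (b * sqrt (mlen \<alpha>))))" by simp
      also have "\<dots> \<le> ereal (cmod (c \<alpha>)) * (ereal K * eexp (omegaM (Wseq \<omega> lam) (msqrt_div \<alpha> h)))"
        by (rule ereal_mult_left_mono) (use K(2)[OF ab] in auto)
      also have "\<dots> = ereal K * (ereal (cmod (c \<alpha>)) * eexp (omegaM (Wseq \<omega> lam) (msqrt_div \<alpha> h)))"
        by (simp add: ac_simps)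
      finally show "ereal (cmod (c \<alpha>) * exp (a * \<omega> (b * sqrt (mlen \<alpha>))))
          \<le> ereal K * (ereal (cmod (c \<alpha>)) * eexp (omegaM (Wseq \<omega> lam) (msqrt_div \<alpha> h)))" .
    qed (use K in simp)
  qed (use K in simp)
qed

end


lemma ereal_mult_lt_fin: "C > 0 \<Longrightarrow> x < \<infinity> \<Longrightarrow> ereal C * x < \<infinity>"
  by (cases x) auto

lemma ereal_mult_lt_div: "C > 0 \<Longrightarrow> x < ereal (e / C) \<Longrightarrow> ereal C * x < ereal e"
  by (cases x) (auto simp: field_simps)

definition dom2 :: "(nat \<Rightarrow> 'd mseq \<Rightarrow> ereal) \<Rightarrow> (nat \<Rightarrow> 'd mseq \<Rightarrow> ereal) \<Rightarrow> bool" where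
  "dom2 N N' \<longleftrightarrow> (\<forall>j\<ge>1. \<exists>k\<ge>1. \<exists>C>0. \<forall>c. N' k c \<le> ereal C * N j c)"

definition dom1 :: "(nat \<Rightarrow> 'd mseq \<Rightarrow> ereal) \<Rightarrow> (nat \<Rightarrow> 'd mseq \<Rightarrow> ereal) \<Rightarrow> bool" where
  "dom1 N N' \<longleftrightarrow> (\<forall>j\<ge>1. \<exists>k\<ge>1. \<exists>C>0. \<forall>c. N j c \<le> ereal C * N' k c)"

lemma LB_set_sub: "dom2 N N' \<Longrightarrow> LB_set N \<subseteq> LB_set N'"
proof
  fix c assume d: "dom2 N N'" and "c \<in> LB_set N"
  then obtain j where j: "j \<ge> 1" "N j c < \<infinity>" unfolding LB_set_def by auto
  from d j(1) obtain k C where kC: "k \<ge> 1" "C > 0" "\<And>c. N' k c \<le> ereal C * N j c"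
    unfolding dom2_def by blast
  have "N' k c < \<infinity>" using kC(3)[of c] ereal_mult_lt_fin[OF kC(2) j(2)] by (rule le_less_trans)
  then show "c \<in> LB_set N'" unfolding LB_set_def using kC(1) by auto
qed

lemma LB_open_sub:
  assumes d1: "dom2 N N'" and d2: "dom2 N' N" and A: "LB_open N A"
  shows "LB_open N' A"
proof -
  have eqs: "LB_set N = LB_set N'" using LB_set_sub[OF d1] LB_set_sub[OF d2] by auto
  show ?thesis unfolding LB_open_def
  proof (intro conjI ballI)
    show "A \<subseteq> LB_set N'" using A eqs unfolding LB_open_def by auto
    fix x assume "x \<in> A"
    then obtain U where U: "abs_convex U" "U \<subseteq> LB_set N" "\<forall>j\<ge>1. \<exists>\<epsilon>>0. {c. N j c < ereal \<epsilon>} \<subseteq> U"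
      "(\<lambda>u. (\<lambda>\<alpha>. x \<alpha> + u \<alpha>)) ` U \<subseteq> A" using A unfolding LB_open_def by blast
    have "\<forall>k\<ge>1. \<exists>\<epsilon>>0. {c. N' k c < ereal \<epsilon>} \<subseteq> U"
    proof (intro allI impI)
      fix k :: nat assume k: "k \<ge> 1"
      from d2 k obtain j C where jC: "j \<ge> 1" "C > 0" "\<And>c. N j c \<le> ereal C * N' k c"
        unfolding dom2_def by blast
      from U(3) jC(1) obtain \<epsilon> where e: "\<epsilon> > 0" "{c. N j c < ereal \<epsilon>} \<subseteq> U" by blast
      show "\<exists>\<epsilon>>0. {c. N' k c < ereal \<epsilon>} \<subseteq> U"
      proof (intro exI[of _ "\<epsilon> / C"] conjI)
        show "\<epsilon> / C > 0" using e jC by simp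
        show "{c. N' k c < ereal (\<epsilon> / C)} \<subseteq> U"
        proof
          fix c assume "c \<in> {c. N' k c < ereal (\<epsilon> / C)}"
          then have "ereal C * N' k c < ereal \<epsilon>" using ereal_mult_lt_div[OF jC(2)] by auto
          then have "N j c < ereal \<epsilon>" using jC(3)[of c] by (rule le_less_trans[rotated])
          then show "c \<in> U" using e by auto
        qed
      qed
    qed
    then show "\<exists>U. abs_convex U \<and> U \<subseteq> LB_set N' \<and> (\<forall>j\<ge>1. \<exists>\<epsilon>>0. {c. N' j c < ereal \<epsilon>} \<subseteq> U) \<and>
        (\<lambda>u. (\<lambda>\<alpha>. x \<alpha> + u \<alpha>)) ` U \<subseteq> A" using U eqs by blast
  qed
qed

lemma LB_eq:
  assumes "dom2 N N'" "dom2 N' N"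
  shows "LB_open N = LB_open N'"
  using LB_open_sub[OF assms] LB_open_sub[OF assms(2,1)] by blast

lemma PL_set_sub: "dom1 N N' \<Longrightarrow> PL_set N' \<subseteq> PL_set N"
proof
  fix c assume d: "dom1 N N'" and c: "c \<in> PL_set N'"
  show "c \<in> PL_set N" unfolding PL_set_def
  proof (intro CollectI allI impI)
    fix j :: nat assume j: "j \<ge> 1"
    from d j obtain k C where kC: "k \<ge> 1" "C > 0" "\<And>c. N j c \<le> ereal C * N' k c"
      unfolding dom1_def by blast
    have "N' k c < \<infinity>" using c kC(1) unfolding PL_set_def by auto
    then show "N j c < \<infinity>" using kC(3)[of c] ereal_mult_lt_fin[OF kC(2)] by (meson le_less_trans)
  qed
qed

lemma PL_open_sub:
  assumes d1: "dom1 N N'" and d2: "dom1 N' N" and A: "PL_open N A"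
  shows "PL_open N' A"
proof -
  have eqs: "PL_set N = PL_set N'" using PL_set_sub[OF d1] PL_set_sub[OF d2] by auto
  from d1 obtain kf Cf where kf: "\<And>j. j \<ge> 1 \<Longrightarrow> kf j \<ge> 1 \<and> Cf j > 0 \<and> (\<forall>c. N j c \<le> ereal (Cf j) * N' (kf j) c)"
    unfolding dom1_def by metis
  show ?thesis unfolding PL_open_def
  proof (intro conjI ballI)
    show "A \<subseteq> PL_set N'" using A eqs unfolding PL_open_def by auto
    fix x assume "x \<in> A"
    then obtain n \<epsilon> where ne: "n \<ge> 1" "\<epsilon> > 0"
      "{y\<in>PL_set N. \<forall>j\<in>{1..n}. N j (\<lambda>\<alpha>. y \<alpha> - x \<alpha>) < ereal \<epsilon>} \<subseteq> A"
      using A unfolding PL_open_def by blast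
    define n' where "n' = Max (kf ` {1..n})"
    define e' where "e' = Min ((\<lambda>j. \<epsilon> / Cf j) ` {1..n})"
    have fin: "finite {1..n}" "{1..n} \<noteq> {}" using ne by auto
    have n'1: "n' \<ge> 1" unfolding n'_def using kf[of 1] ne(1) fin
      by (meson Max_ge atLeastAtMost_iff finite_imageI imageI le_refl order_trans)
    have kn: "\<And>j. j \<in> {1..n} \<Longrightarrow> kf j \<in> {1..n'}"
      unfolding n'_def using kf fin by (auto intro: Max_ge)
    have e'0: "e' > 0" unfolding e'_def using fin kf ne(2) by (auto)
    have e'le: "\<And>j. j \<in> {1..n} \<Longrightarrow> e' \<le> \<epsilon> / Cf j" unfolding e'_def using fin by (intro Min_le) auto
    show "\<exists>n\<ge>1. \<exists>\<epsilon>>0. {y \<in> PL_set N'. \<forall>j\<in>{1..n}. N' j (\<lambda>\<alpha>. y \<alpha> - x \<alpha>) < ereal \<epsilon>} \<subseteq> A"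
    proof (intro exI[of _ n'] exI[of _ e'] conjI n'1 e'0 subsetI)
      fix y assume y: "y \<in> {y \<in> PL_set N'. \<forall>j\<in>{1..n'}. N' j (\<lambda>\<alpha>. y \<alpha> - x \<alpha>) < ereal e'}"
      have "\<forall>j\<in>{1..n}. N j (\<lambda>\<alpha>. y \<alpha> - x \<alpha>) < ereal \<epsilon>"
      proof
        fix j assume j: "j \<in> {1..n}"
        have kfj: "kf j \<ge> 1" "Cf j > 0" "N j (\<lambda>\<alpha>. y \<alpha> - x \<alpha>) \<le> ereal (Cf j) * N' (kf j) (\<lambda>\<alpha>. y \<alpha> - x \<alpha>)"
          using kf[of j] j by auto
        have "N' (kf j) (\<lambda>\<alpha>. y \<alpha> - x \<alpha>) < ereal e'" using y kn[OF j] by auto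
        also have "\<dots> \<le> ereal (\<epsilon> / Cf j)" using e'le[OF j] by simp
        finally have "ereal (Cf j) * N' (kf j) (\<lambda>\<alpha>. y \<alpha> - x \<alpha>) < ereal \<epsilon>"
          by (rule ereal_mult_lt_div[OF kfj(2)])
        then show "N j (\<lambda>\<alpha>. y \<alpha> - x \<alpha>) < ereal \<epsilon>" using kfj(3) by (rule le_less_trans[rotated])
      qed
      moreover have "y \<in> PL_set N" using y eqs by auto
      ultimately show "y \<in> A" using ne(3) by auto
    qed
  qed
qed

lemma PL_eq:
  assumes "dom1 N N'" "dom1 N' N"
  shows "PL_open N = PL_open N'"
  using PL_open_sub[OF assms] PL_open_sub[OF assms(2,1)] by blast



lemma real_div_le_aux: "0 < x \<Longrightarrow> x \<le> y \<Longrightarrow> 1 / y \<le> 1 / (x::real)"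
  by (simp add: frac_le)

theorem proposition6p8:
  fixes \<omega> :: "real \<Rightarrow> real"
  assumes "weight_function \<omega>"
  shows "(Lambda_R \<omega> :: 'd::finite mseq set) = Lambda_MR \<omega>
    \<and> (LB_open (norm_R \<omega>) :: 'd mseq set \<Rightarrow> bool) = LB_open (norm_MR \<omega>)
    \<and> (Lambda_B \<omega> :: 'd mseq set) = Lambda_MB \<omega>
    \<and> (PL_open (norm_B \<omega>) :: 'd mseq set \<Rightarrow> bool) = PL_open (norm_MB \<omega>)"
proof -
  note wf = assms
  define D where "D = CARD('d)"
  have D1: "D \<ge> 1" unfolding D_def by (simp add: Suc_le_eq)
  have RD: "real D = real CARD('d)" unfolding D_def by simp
  have R1: "\<And>j c. j \<ge> 1 \<Longrightarrow> norm_MR \<omega> j (c::'d mseq) \<le> ereal (exp (\<omega> 1 / real j)) * norm_R \<omega> j c"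
  proof -
    fix j :: nat and c :: "'d mseq" assume j: "j \<ge> 1"
    have "normM (Wseq \<omega> (real j)) (real j) c \<le> ereal (exp (\<omega> 1 / real j)) * normG \<omega> (1 / real j) (1 / real j) c"
      by (rule normM_le_G[OF wf]) (use j in auto)
    then show "norm_MR \<omega> j c \<le> ereal (exp (\<omega> 1 / real j)) * norm_R \<omega> j c"
      unfolding norm_MR_def norm_R_G[OF j] .
  qed
  have Rlow: "\<And>lam h. lam > 0 \<Longrightarrow> h > 0 \<Longrightarrow> \<exists>K>0. \<forall>k::nat. real k \<ge> 2 * lam \<longrightarrow> real k \<ge> real D * h \<longrightarrow>
        (\<forall>c::'d mseq. norm_R \<omega> k c \<le> ereal K * normM (Wseq \<omega> lam) h c)"
  proof -
    fix lam h :: real assume lam: "lam > 0" and h: "h > 0"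
    obtain K where K: "K > 0" "\<And>a b. 0 < a \<Longrightarrow> a \<le> 1 / (2 * lam) \<Longrightarrow> 0 < b \<Longrightarrow> b \<le> 1 / (real CARD('d) * h) \<Longrightarrow>
       (\<forall>c :: 'd mseq. normG \<omega> a b c \<le> ereal K * normM (Wseq \<omega> lam) h c)"
      using G_le_normM[OF wf lam h] by blast
    show "\<exists>K>0. \<forall>k::nat. real k \<ge> 2 * lam \<longrightarrow> real k \<ge> real D * h \<longrightarrow>
        (\<forall>c::'d mseq. norm_R \<omega> k c \<le> ereal K * normM (Wseq \<omega> lam) h c)"
    proof (intro exI[of _ K] conjI allI impI)
      fix k :: nat and c :: "'d mseq" assume k1: "real k \<ge> 2 * lam" and k2: "real k \<ge> real D * h"
      have kp: "real k > 0" using k1 lam by linarith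
      then have kge: "k \<ge> 1" by simp
      have "normG \<omega> (1 / real k) (1 / real k) c \<le> ereal K * normM (Wseq \<omega> lam) h c"
      proof (rule K(2)[rule_format])
        show "0 < 1 / real k" using kp by simp
        show "1 / real k \<le> 1 / (2 * lam)" by (rule real_div_le_aux) (use lam k1 in auto)
        show "1 / real k \<le> 1 / (real CARD('d) * h)" unfolding RD[symmetric]
          by (rule real_div_le_aux) (use D1 h k2 in auto)
      qed (use kp in simp)
      then show "norm_R \<omega> k c \<le> ereal K * normM (Wseq \<omega> lam) h c" unfolding norm_R_G[OF kge] .
    qed (use K in simp)
  qed
  have dR1: "dom2 (norm_R \<omega>) (norm_MR \<omega> :: nat \<Rightarrow> 'd mseq \<Rightarrow> ereal)"
    unfolding dom2_def
  proof (intro allI impI)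
    fix j :: nat assume j: "j \<ge> 1"
    show "\<exists>k\<ge>1. \<exists>C>0. \<forall>c. norm_MR \<omega> k c \<le> ereal C * norm_R \<omega> j (c::'d mseq)"
      by (intro exI[of _ j] conjI exI[of _ "exp (\<omega> 1 / real j)"] allI R1 j exp_gt_zero)
  qed
  have dR2: "dom2 (norm_MR \<omega>) (norm_R \<omega> :: nat \<Rightarrow> 'd mseq \<Rightarrow> ereal)"
    unfolding dom2_def
  proof (intro allI impI)
    fix j :: nat assume j: "j \<ge> 1"
    obtain K where K: "K > 0" "\<And>k. real k \<ge> 2 * real j \<Longrightarrow> real k \<ge> real D * real j \<Longrightarrow>
        (\<forall>c::'d mseq. norm_R \<omega> k c \<le> ereal K * normM (Wseq \<omega> (real j)) (real j) c)"
      using Rlow[of "real j" "real j"] j by auto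
    have a: "real (2 * j * D) \<ge> 2 * real j" using D1 j by simp
    have b: "real (2 * j * D) \<ge> real D * real j" using D1 j by simp
    have "2 * j * D \<ge> 1" using D1 j by simp
    then show "\<exists>k\<ge>1. \<exists>C>0. \<forall>c. norm_R \<omega> k c \<le> ereal C * norm_MR \<omega> j (c::'d mseq)"
      using K(1) K(2)[OF a b] unfolding norm_MR_def by blast
  qed
  have LR: "(Lambda_R \<omega> :: 'd mseq set) = Lambda_MR \<omega>"
  proof
    show "(Lambda_R \<omega> :: 'd mseq set) \<subseteq> Lambda_MR \<omega>"
    proof
      fix c :: "'d mseq" assume "c \<in> Lambda_R \<omega>"
      then obtain j where j: "j \<ge> 1" "norm_R \<omega> j c < \<infinity>" unfolding Lambda_R_def by auto
      have "norm_MR \<omega> j c < \<infinity>"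
        using R1[OF j(1), of c] ereal_mult_lt_fin[OF exp_gt_zero j(2)] by (rule le_less_trans)
      then have "normM (Wseq \<omega> (real j)) (real j) c < \<infinity>" unfolding norm_MR_def .
      moreover have "real j > 0" using j(1) by simp
      ultimately show "c \<in> Lambda_MR \<omega>" unfolding Lambda_MR_def by blast
    qed
    show "(Lambda_MR \<omega> :: 'd mseq set) \<subseteq> Lambda_R \<omega>"
    proof
      fix c :: "'d mseq" assume "c \<in> Lambda_MR \<omega>"
      then obtain lam h where lh: "lam > 0" "h > 0" "normM (Wseq \<omega> lam) h c < \<infinity>"
        unfolding Lambda_MR_def by auto
      obtain K where K: "K > 0" "\<And>k. real k \<ge> 2 * lam \<Longrightarrow> real k \<ge> real D * h \<Longrightarrow>
        (\<forall>c::'d mseq. norm_R \<omega> k c \<le> ereal K * normM (Wseq \<omega> lam) h c)"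
        using Rlow[OF lh(1,2)] by auto
      define k where "k = nat \<lceil>2 * lam + real D * h\<rceil> + 1"
      have kr: "real k \<ge> 2 * lam + real D * h" unfolding k_def by linarith
      have "real D * h \<ge> 0" using lh by simp
      then have a: "real k \<ge> 2 * lam" using kr by linarith
      have b: "real k \<ge> real D * h" using kr lh by linarith
      have "norm_R \<omega> k c < \<infinity>"
        using K(2)[OF a b, rule_format, of c] ereal_mult_lt_fin[OF K(1) lh(3)] by (rule le_less_trans)
      then show "c \<in> Lambda_R \<omega>" unfolding Lambda_R_def k_def by auto
    qed
  qed
  have B1: "\<And>j c. j \<ge> 1 \<Longrightarrow> norm_MB \<omega> j (c::'d mseq) \<le> ereal (exp (\<omega> 1 / (1 / real j))) * norm_B \<omega> j c"
  proof -
    fix j :: nat and c :: "'d mseq" assume j: "j \<ge> 1"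
    have "normM (Wseq \<omega> (1 / real j)) (1 / real j) c \<le> ereal (exp (\<omega> 1 / (1 / real j))) * normG \<omega> (real j) (real j) c"
      by (rule normM_le_G[OF wf]) (use j in auto)
    then show "norm_MB \<omega> j c \<le> ereal (exp (\<omega> 1 / (1 / real j))) * norm_B \<omega> j c"
      unfolding norm_MB_def norm_B_G[OF j] .
  qed
  have B2: "\<And>j. j \<ge> 1 \<Longrightarrow> \<exists>C>0. \<forall>c::'d mseq. norm_B \<omega> j c \<le> ereal C * norm_MB \<omega> (2 * j * D) c"
  proof -
    fix j :: nat assume j: "j \<ge> 1"
    define k where "k = 2 * j * D"
    have kr: "real k = 2 * real j * real D" unfolding k_def by simp
    have kp: "real k > 0" using kr j D1 by simp
    obtain K where K: "K > 0" "\<And>a b. 0 < a \<Longrightarrow> a \<le> 1 / (2 * (1 / real k)) \<Longrightarrow> 0 < b \<Longrightarrow> b \<le> 1 / (real CARD('d) * (1 / real k)) \<Longrightarrow>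
       (\<forall>c :: 'd mseq. normG \<omega> a b c \<le> ereal K * normM (Wseq \<omega> (1 / real k)) (1 / real k) c)"
      using G_le_normM[OF wf, of "1 / real k" "1 / real k"] kp by auto
    have a: "real j \<le> 1 / (2 * (1 / real k))" using kr D1 j by simp
    have b: "real j \<le> 1 / (real CARD('d) * (1 / real k))" using kr D1 j unfolding RD[symmetric] by simp
    show "\<exists>C>0. \<forall>c::'d mseq. norm_B \<omega> j c \<le> ereal C * norm_MB \<omega> (2 * j * D) c"
      using K(1) K(2)[OF _ a _ b] j unfolding norm_MB_def k_def[symmetric] norm_B_G[OF j] by auto
  qed
  have dB1: "dom1 (norm_B \<omega>) (norm_MB \<omega> :: nat \<Rightarrow> 'd mseq \<Rightarrow> ereal)"
    unfolding dom1_def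
  proof (intro allI impI)
    fix j :: nat assume j: "j \<ge> 1"
    have "2 * j * D \<ge> 1" using D1 j by simp
    then show "\<exists>k\<ge>1. \<exists>C>0. \<forall>c. norm_B \<omega> j c \<le> ereal C * norm_MB \<omega> k (c::'d mseq)"
      using B2[OF j] by blast
  qed
  have dB2: "dom1 (norm_MB \<omega>) (norm_B \<omega> :: nat \<Rightarrow> 'd mseq \<Rightarrow> ereal)"
    unfolding dom1_def
  proof (intro allI impI)
    fix j :: nat assume j: "j \<ge> 1"
    show "\<exists>k\<ge>1. \<exists>C>0. \<forall>c. norm_MB \<omega> j c \<le> ereal C * norm_B \<omega> k (c::'d mseq)"
      by (intro exI[of _ j] conjI exI[of _ "exp (\<omega> 1 / (1 / real j))"] allI B1 j exp_gt_zero)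
  qed
  have LB: "(Lambda_B \<omega> :: 'd mseq set) = Lambda_MB \<omega>"
  proof
    show "(Lambda_B \<omega> :: 'd mseq set) \<subseteq> Lambda_MB \<omega>"
    proof
      fix c :: "'d mseq" assume c: "c \<in> Lambda_B \<omega>"
      show "c \<in> Lambda_MB \<omega>" unfolding Lambda_MB_def
      proof (intro CollectI allI impI)
        fix lam h :: real assume lam: "lam > 0" and h: "h > 0"
        define j where "j = nat \<lceil>1 / lam + 1 / h\<rceil> + 1"
        have jr: "real j \<ge> 1 / lam + 1 / h" unfolding j_def by linarith
        have j1: "j \<ge> 1" unfolding j_def by simp
        have a: "real j \<ge> 1 / lam" using jr h by (smt (verit) divide_pos_pos)
        have b: "real j \<ge> 1 / h" using jr lam by (smt (verit) divide_pos_pos)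
        have "normM (Wseq \<omega> lam) h c \<le> ereal (exp (\<omega> 1 / lam)) * normG \<omega> (real j) (real j) c"
          by (rule normM_le_G[OF wf lam h a b])
        also have "\<dots> = ereal (exp (\<omega> 1 / lam)) * norm_B \<omega> j c" by (simp only: norm_B_G[OF j1])
        also have "\<dots> < \<infinity>"
          by (rule ereal_mult_lt_fin) (use c j1 in \<open>auto simp: Lambda_B_def\<close>)
        finally show "normM (Wseq \<omega> lam) h c < \<infinity>" .
      qed
    qed
    show "(Lambda_MB \<omega> :: 'd mseq set) \<subseteq> Lambda_B \<omega>"
    proof
      fix c :: "'d mseq" assume c: "c \<in> Lambda_MB \<omega>"
      show "c \<in> Lambda_B \<omega>" unfolding Lambda_B_def
      proof (intro CollectI allI impI)
        fix j :: nat assume j: "j \<ge> 1"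
        obtain C where C: "C > 0" "\<And>c::'d mseq. norm_B \<omega> j c \<le> ereal C * norm_MB \<omega> (2 * j * D) c"
          using B2[OF j] by blast
        have kp: "real (2 * j * D) > 0" using j D1 by simp
        have "norm_MB \<omega> (2 * j * D) c < \<infinity>" using c kp unfolding Lambda_MB_def norm_MB_def by auto
        then show "norm_B \<omega> j c < \<infinity>" using C(2)[of c] ereal_mult_lt_fin[OF C(1)]
          by (meson le_less_trans)
      qed
    qed
  qed
  show ?thesis using LR LB LB_eq[OF dR1 dR2] PL_eq[OF dB1 dB2] by blast
qed


end
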